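(* Let $\mu^*\in\mathbb P(S)$ with $\mu^*(x)>0$ for all $x\in S$. Then there exists $\alpha_0\in(\tfrac12,1)$ such that for every $\alpha\in[\alpha_0,1]$ there is a kernel $\bar Q^*$ (i.e. $\bar Q^*(\cdot|x)$ a probability on $D(x)$ for each $x$, equivalently $Q^*=\mu^*\otimes\bar Q^*\in\mathbb P(D)$) with $\mu^*=\mu^*P^{\bar Q^*}$, i.e. $\mu^*$ is a stationary distribution of the transition matrix $P^{\bar Q^*}$.
   Context: $S=\{1,\dots,d\}$ are the nodes of a connected undirected graph with edge set $E$ (no loops), and $D(x):=\{x'\in S:(x,x')\in E\}\cup\{x\}\subset A:=S$; assume $|D(x)|\ge2$ for all $x$. Fix $\alpha\in(0,1]$. For $a\in D(x)$ and $x'\in S$ let $p^{x,a}(x'):=\alpha$ if $x'=a$, $p^{x,a}(x'):=\frac{1-\alpha}{|D(x)|-1}$ if $x'\in D(x)\setminus\{a\}$, and $p^{x,a}(x'):=0$ otherwise (an individual at $x$ choosing $a$ moves to $a$ with probability $\alpha$ and otherwise uniformly to another element of $D(x)$). For a kernel $\bar Q$ with $\bar Q(\cdot|x)$ a probability on $D(x)$, $P^{\bar Q}$ is the $d\times d$ matrix with entries $p^{\bar Q}_{xx'}:=\sum_{a\in D(x)}p^{x,a}(x')\bar Q(a|x)$; $\mu$ is treated as a row vector and $\mu\otimes\bar Q$ denotes the measure $(x,a)\mapsto\mu(x)\bar Q(a|x)$ on $D:=\{(x,a):a\in D(x)\}$. *)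

theory Defs
  imports Complex_Main
begin

text \<open>Nodes S = {1..d}; E is a set of ordered pairs (symmetric, irreflexive).\<close>

definition Dset :: "(nat \<times> nat) set \<Rightarrow> nat \<Rightarrow> nat set" where
  "Dset E x = {x'. (x, x') \<in> E} \<union> {x}"

definition ptrans :: "real \<Rightarrow> (nat \<times> nat) set \<Rightarrow> nat \<Rightarrow> nat \<Rightarrow> nat \<Rightarrow> real" where
  "ptrans \<alpha> E x a x' =
     (if x' = a then \<alpha>
      else if x' \<in> Dset E x then (1 - \<alpha>) / (real (card (Dset E x)) - 1)
      else 0)"

(* Kernel: Qbar x a = Qbar(a|x); PQ gives entries of P^Qbar *)
definition PQ :: "real \<Rightarrow> (nat \<times> nat) set \<Rightarrow> (nat \<Rightarrow> nat \<Rightarrow> real) \<Rightarrow> nat \<Rightarrow> nat \<Rightarrow> real" where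
  "PQ \<alpha> E Qbar x x' = (\<Sum>a\<in>Dset E x. ptrans \<alpha> E x a x' * Qbar x a)"

definition is_kernel :: "nat \<Rightarrow> (nat \<times> nat) set \<Rightarrow> (nat \<Rightarrow> nat \<Rightarrow> real) \<Rightarrow> bool" where
  "is_kernel d E Qbar \<longleftrightarrow>
     (\<forall>x\<in>{1..d}. (\<forall>a\<in>Dset E x. Qbar x a \<ge> 0) \<and> (\<Sum>a\<in>Dset E x. Qbar x a) = 1)"

definition is_stationary :: "nat \<Rightarrow> (nat \<Rightarrow> real) \<Rightarrow> (nat \<Rightarrow> nat \<Rightarrow> real) \<Rightarrow> bool" where
  "is_stationary d \<mu> P \<longleftrightarrow> (\<forall>x'\<in>{1..d}. \<mu> x' = (\<Sum>x\<in>{1..d}. \<mu> x * P x x'))"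

end

theory Submission
  imports Defs
begin

lemma sum_ptrans_in:
  fixes q :: "nat \<Rightarrow> real"
  assumes "finite D" "x' \<in> D" "(\<Sum>a\<in>D. q a) = 1"
  shows "(\<Sum>a\<in>D. (if x' = a then \<alpha> else if x' \<in> D then \<beta> else 0) * q a) = \<beta> + (\<alpha> - \<beta>) * q x'"
proof -
  have "(\<Sum>a\<in>D. (if x' = a then \<alpha> else if x' \<in> D then \<beta> else 0) * q a)
      = \<alpha> * q x' + (\<Sum>a\<in>D-{x'}. (if x' = a then \<alpha> else if x' \<in> D then \<beta> else 0) * q a)"
    using assms by (simp add: sum.remove)
  also have "(\<Sum>a\<in>D-{x'}. (if x' = a then \<alpha> else if x' \<in> D then \<beta> else 0) * q a) = (\<Sum>a\<in>D-{x'}. \<beta> * q a)"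
    using assms by (intro sum.cong) auto
  also have "\<dots> = \<beta> * (1 - q x')"
    using assms by (simp add: sum_distrib_left[symmetric] sum_diff1)
  finally show ?thesis by (simp add: algebra_simps)
qed

lemma PQ_in:
  assumes "finite (Dset E x)" "x' \<in> Dset E x" "(\<Sum>a\<in>Dset E x. Q x a) = 1"
  shows "PQ \<alpha> E Q x x' = (1 - \<alpha>) / (real (card (Dset E x)) - 1) + (\<alpha> - (1 - \<alpha>) / (real (card (Dset E x)) - 1)) * Q x x'"
  unfolding PQ_def ptrans_def
  by (rule sum_ptrans_in[OF assms])

lemma PQ_out:
  assumes "x' \<notin> Dset E x"
  shows "PQ \<alpha> E Q x x' = 0"
  unfolding PQ_def ptrans_def using assms by (intro sum.neutral) auto

theorem mainTheorem13:
  fixes d :: nat and E :: "(nat \<times> nat) set" and \<mu> :: "nat \<Rightarrow> real"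
  assumes E_sub: "E \<subseteq> {1..d} \<times> {1..d}"
    and E_sym: "\<And>x y. (x, y) \<in> E \<Longrightarrow> (y, x) \<in> E"
    and E_noloop: "\<And>x. (x, x) \<notin> E"
    and E_conn: "\<And>x y. x \<in> {1..d} \<Longrightarrow> y \<in> {1..d} \<Longrightarrow> (x, y) \<in> E\<^sup>*"
    and D_card: "\<And>x. x \<in> {1..d} \<Longrightarrow> card (Dset E x) \<ge> 2"
    and \<mu>_pos: "\<And>x. x \<in> {1..d} \<Longrightarrow> \<mu> x > 0"
    and \<mu>_sum: "(\<Sum>x\<in>{1..d}. \<mu> x) = 1"
  shows "\<exists>\<alpha>0::real. 1/2 < \<alpha>0 \<and> \<alpha>0 < 1 \<and>
           (\<forall>\<alpha>. \<alpha>0 \<le> \<alpha> \<and> \<alpha> \<le> 1 \<longrightarrow>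
              (\<exists>Qbar. is_kernel d E Qbar \<and> is_stationary d \<mu> (PQ \<alpha> E Qbar)))"
proof -
  define C where "C = 2 + (\<Sum>x\<in>{1..d}. real d / \<mu> x)"
  have termnn: "\<And>x. x \<in> {1..d} \<Longrightarrow> real d / \<mu> x \<ge> 0" using \<mu>_pos by (simp add: less_imp_le)
  have C2: "C \<ge> 2" unfolding C_def using sum_nonneg[of "{1..d}" "\<lambda>x. real d / \<mu> x", OF termnn] by simp
  have Cterm: "\<And>x. x \<in> {1..d} \<Longrightarrow> real d / \<mu> x + 2 \<le> C"
  proof -
    fix x assume x: "x \<in> {1..d}"
    have "real d / \<mu> x \<le> (\<Sum>x\<in>{1..d}. real d / \<mu> x)"
      using x termnn by (intro member_le_sum) auto
    thus "real d / \<mu> x + 2 \<le> C" unfolding C_def by simp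
  qed
  have \<mu>le1: "\<And>x. x \<in> {1..d} \<Longrightarrow> \<mu> x \<le> 1"
  proof -
    fix x assume x: "x \<in> {1..d}"
    have "\<mu> x \<le> (\<Sum>x\<in>{1..d}. \<mu> x)"
      using x \<mu>_pos by (intro member_le_sum) (auto simp: less_imp_le)
    thus "\<mu> x \<le> 1" using \<mu>_sum by simp
  qed
  have Dsub: "\<And>x. x \<in> {1..d} \<Longrightarrow> Dset E x \<subseteq> {1..d}"
    using E_sub unfolding Dset_def by auto
  have Dfin: "\<And>x. x \<in> {1..d} \<Longrightarrow> finite (Dset E x)"
    using Dsub finite_subset by blast
  have Dle: "\<And>x. x \<in> {1..d} \<Longrightarrow> card (Dset E x) \<le> d"
    using Dsub by (metis card_atLeastAtMost card_mono diff_Suc_1 finite_atLeastAtMost)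
  define \<alpha>0 where "\<alpha>0 = 1 - 1 / (2 * C)"
  have "1/2 < \<alpha>0 \<and> \<alpha>0 < 1" unfolding \<alpha>0_def using C2 by (auto simp: field_simps)
  moreover have "\<forall>\<alpha>. \<alpha>0 \<le> \<alpha> \<and> \<alpha> \<le> 1 \<longrightarrow>
              (\<exists>Qbar. is_kernel d E Qbar \<and> is_stationary d \<mu> (PQ \<alpha> E Qbar))"
  proof (intro allI impI)
    fix \<alpha> assume a: "\<alpha>0 \<le> \<alpha> \<and> \<alpha> \<le> 1"
    have aC: "(1 - \<alpha>) * C \<le> 1/2" using a C2 unfolding \<alpha>0_def by (auto simp: field_simps)
    have a1: "1 - \<alpha> \<le> 1/4"
    proof -
      have "(1 - \<alpha>) * 2 \<le> (1 - \<alpha>) * C" using C2 a by (intro mult_left_mono) auto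
      thus ?thesis using aC by simp
    qed
    define n where "n x = real (card (Dset E x))" for x
    define \<beta> where "\<beta> x = (1 - \<alpha>) / (n x - 1)" for x
    define R where "R x a = (if a = x then 1 - (n x - 1) * (1 - \<alpha>) / \<mu> x else (1 - \<alpha>) / \<mu> x)" for x a
    define Q where "Q x a = (R x a - \<beta> x) / (\<alpha> - \<beta> x)" for x a
    have n2: "\<And>x. x \<in> {1..d} \<Longrightarrow> n x \<ge> 2" unfolding n_def using D_card by force
    have nd: "\<And>x. x \<in> {1..d} \<Longrightarrow> n x \<le> real d" unfolding n_def using Dle by simp
    have \<beta>le: "\<And>x. x \<in> {1..d} \<Longrightarrow> \<beta> x \<le> 1 - \<alpha> \<and> 0 \<le> \<beta> x"
    proof -
      fix x assume x: "x \<in> {1..d}"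
      have "n x - 1 \<ge> 1" using n2[OF x] by simp
      thus "\<beta> x \<le> 1 - \<alpha> \<and> 0 \<le> \<beta> x" unfolding \<beta>_def using a
        by (auto simp: field_simps intro: mult_left_mono[of 1 "n x - 1" "1-\<alpha>", simplified])
    qed
    have gap: "\<And>x. x \<in> {1..d} \<Longrightarrow> \<alpha> - \<beta> x > 0" using \<beta>le a1 by force
    have Rge: "\<And>x a. x \<in> {1..d} \<Longrightarrow> R x a \<ge> \<beta> x"
    proof -
      fix x a assume x: "x \<in> {1..d}"
      have mu: "0 < \<mu> x" "\<mu> x \<le> 1" using \<mu>_pos \<mu>le1 x by auto
      have off: "(1 - \<alpha>) / \<mu> x \<ge> 1 - \<alpha>" using mu a by (auto simp: field_simps intro: mult_left_mono[of "\<mu> x" 1 "1-\<alpha>", simplified])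
      have "(n x - 1) / \<mu> x \<le> real d / \<mu> x" using nd[OF x] mu by (auto simp: divide_right_mono)
      hence "(n x - 1) / \<mu> x + 2 \<le> C" using Cterm[OF x] by simp
      hence "(1 - \<alpha>) * ((n x - 1) / \<mu> x + 2) \<le> (1 - \<alpha>) * C" using a by (intro mult_left_mono) auto
      moreover have "(1 - \<alpha>) * ((n x - 1) / \<mu> x + 2) = (n x - 1) * (1 - \<alpha>) / \<mu> x + 2 * (1 - \<alpha>)"
        by (simp add: algebra_simps)
      ultimately have le: "(n x - 1) * (1 - \<alpha>) / \<mu> x + 2 * (1 - \<alpha>) \<le> 1/2" using aC by linarith
      have "(n x - 1) * (1 - \<alpha>) / \<mu> x + (1 - \<alpha>) \<le> (n x - 1) * (1 - \<alpha>) / \<mu> x + 2 * (1 - \<alpha>)"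
        using a by simp
      hence "(n x - 1) * (1 - \<alpha>) / \<mu> x + (1 - \<alpha>) \<le> 1" using le by linarith
      hence diag: "1 - (n x - 1) * (1 - \<alpha>) / \<mu> x \<ge> 1 - \<alpha>" by simp
      show "R x a \<ge> \<beta> x" unfolding R_def using diag off \<beta>le[OF x] by auto
    qed
    have sumR: "\<And>x. x \<in> {1..d} \<Longrightarrow> (\<Sum>a\<in>Dset E x. R x a) = 1"
    proof -
      fix x assume x: "x \<in> {1..d}"
      have xin: "x \<in> Dset E x" unfolding Dset_def by simp
      have "(\<Sum>a\<in>Dset E x. R x a) = R x x + (\<Sum>a\<in>Dset E x - {x}. R x a)"
        using Dfin[OF x] xin by (simp add: sum.remove)
      also have "(\<Sum>a\<in>Dset E x - {x}. R x a) = (\<Sum>a\<in>Dset E x - {x}. (1 - \<alpha>) / \<mu> x)"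
        unfolding R_def by (intro sum.cong) auto
      also have "\<dots> = (n x - 1) * ((1 - \<alpha>) / \<mu> x)"
        using Dfin[OF x] xin n2[OF x] unfolding n_def by (simp add: card_Diff_singleton of_nat_diff)
      finally show "(\<Sum>a\<in>Dset E x. R x a) = 1" unfolding R_def by simp
    qed
    have sumQ: "\<And>x. x \<in> {1..d} \<Longrightarrow> (\<Sum>a\<in>Dset E x. Q x a) = 1"
    proof -
      fix x assume x: "x \<in> {1..d}"
      have "(\<Sum>a\<in>Dset E x. Q x a) = ((\<Sum>a\<in>Dset E x. R x a) - n x * \<beta> x) / (\<alpha> - \<beta> x)"
        unfolding Q_def n_def by (simp add: sum_divide_distrib[symmetric] sum_subtractf)
      also have "n x * \<beta> x = (1 - \<alpha>) + \<beta> x" unfolding \<beta>_def using n2[OF x] by (simp add: field_simps)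
      finally show "(\<Sum>a\<in>Dset E x. Q x a) = 1" using sumR[OF x] gap[OF x] by simp
    qed
    have ker: "is_kernel d E Q"
      unfolding is_kernel_def using sumQ Rge gap unfolding Q_def
      by (auto intro!: divide_nonneg_pos)
    have PQv: "\<And>x x'. x \<in> {1..d} \<Longrightarrow> \<mu> x * PQ \<alpha> E Q x x' =
        (if x = x' then \<mu> x' - (n x' - 1) * (1 - \<alpha>) else if (x, x') \<in> E then 1 - \<alpha> else 0)"
    proof -
      fix x x' assume x: "x \<in> {1..d}"
      have mu: "\<mu> x > 0" using \<mu>_pos x by auto
      show "?thesis x x'"
      proof (cases "x' \<in> Dset E x")
        case True
        have "PQ \<alpha> E Q x x' = \<beta> x + (\<alpha> - \<beta> x) * Q x x'"
          using PQ_in[where Q=Q and \<alpha>=\<alpha>, OF Dfin[OF x] True sumQ[OF x]] unfolding \<beta>_def n_def by simp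
        also have "\<dots> = R x x'" unfolding Q_def using gap[OF x] by simp
        finally show ?thesis using True mu E_noloop unfolding R_def Dset_def by (auto simp: field_simps)
      next
        case False
        thus ?thesis using PQ_out[OF False] unfolding Dset_def by auto
      qed
    qed
    have stat: "is_stationary d \<mu> (PQ \<alpha> E Q)"
      unfolding is_stationary_def
    proof
      fix x' assume x': "x' \<in> {1..d}"
      have "(\<Sum>x\<in>{1..d}. \<mu> x * PQ \<alpha> E Q x x') =
         (\<Sum>x\<in>{1..d}. (if x = x' then \<mu> x' - (n x' - 1) * (1 - \<alpha>) else 0) + (if (x, x') \<in> E then 1 - \<alpha> else 0))"
        using PQv E_noloop by (intro sum.cong) auto
      also have "\<dots> = (\<mu> x' - (n x' - 1) * (1 - \<alpha>)) + (1 - \<alpha>) * real (card {x\<in>{1..d}. (x, x') \<in> E})"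
        using x' by (simp add: sum.distrib sum.If_cases Int_def)
      also have "{x\<in>{1..d}. (x, x') \<in> E} = {y. (x', y) \<in> E}"
        using E_sub E_sym by auto
      also have "real (card {y. (x', y) \<in> E}) = n x' - 1"
      proof -
        have fin: "finite {y. (x', y) \<in> E}" using Dfin[OF x'] unfolding Dset_def by simp
        have "x' \<notin> {y. (x', y) \<in> E}" using E_noloop by simp
        hence "card (Dset E x') = card {y. (x', y) \<in> E} + 1" unfolding Dset_def using fin by simp
        thus ?thesis unfolding n_def by simp
      qed
      finally show "\<mu> x' = (\<Sum>x\<in>{1..d}. \<mu> x * PQ \<alpha> E Q x x')" by simp
    qed
    show "\<exists>Qbar. is_kernel d E Qbar \<and> is_stationary d \<mu> (PQ \<alpha> E Qbar)"
      using ker stat by blast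
  qed
  ultimately show ?thesis by blast
qed

end
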